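(* Assume: (C2)$'$ there exist $p_0>1$ and $C_0>0$ with $|c({\bm z},w)|\le C_0(\|{\bm z}\|^{p_0-1}+|w|^{p_0-1}+1)$ for all $({\bm z},w)\in Z\times Y$; (C4)$'$ $c({\bm z},\cdot)$ is differentiable and there exist $C_1>0$, $p_1\ge1$ with $|c_2'({\bm z}_1,w_1)-c_2'({\bm z}_2,w_2)|\le C_1L_{p_1}({\bm z}_1,{\bm z}_2)(\|{\bm z}_1-{\bm z}_2\|+|w_1-w_2|)$ for all $w_1,w_2\in\mathbb{R}$, ${\bm z}_1,{\bm z}_2\in Z$; (C5) $c({\bm z},\cdot)$ is twice differentiable and there exist $C_2>0$, $p_2\ge1$ with $|c_2''({\bm z}_1,w_1)-c_2''({\bm z}_2,w_2)|\le C_2L_{p_2}({\bm z}_1,{\bm z}_2)(\|{\bm z}_1-{\bm z}_2\|+|w_1-w_2|)$ for all $w_1,w_2\in Y$, ${\bm z}_1,{\bm z}_2\in Z$; (K1)$'$ there is $C_3>0$ with $\|k_{{\bm x}_1}-k_{{\bm x}_2}\|_k\le C_3\|{\bm x}_1-{\bm x}_2\|$ for all ${\bm x}_1,{\bm x}_2\in X$. For ${\bm h}\in{\cal H}_k$ (and a given ${\bm f}$) let $$\widetilde{\mathcal P}_{\bm h}:=\{Q\in\mathscr{P}(Z):\mathbb{E}_Q[|c_2'({\bm z},{\bm f}({\bm x}))|\|k_{\bm x}\|_k]<\infty,\ \mathbb{E}_Q[|c_2''({\bm z},{\bm f}({\bm x}))|\|T_{\bm x}{\bm h}\|_k]<\infty\},$$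 where $T_{\bm x}{\bm h}:=k_{\bm x}\langle k_{\bm x},{\bm h}\rangle$. Then ${\cal M}_Z^{\max\{p_1+1,p_2+2\}}\subset\widetilde{\mathcal P}_{\bm h}$ for all ${\bm h}\in{\cal H}_k$, and $$D_{\bm f}\big(\mathbb{E}_Q[c_2'({\bm z},{\bm f}({\bm x}))k_{\bm x}]\big)=\mathbb{E}_Q[c_2''({\bm z},{\bm f}({\bm x}))T_{\bm x}]\quad\forall Q\in{\cal M}_Z^{\max\{p_1+1,p_2+2\}}.$$
   Context: Setting: $X\subset\mathbb{R}^n$, $Y\subset\mathbb{R}$, $Z=X\times Y$ with norm $\|\cdot\|$, ${\bm z}=({\bm x},y)$; $k$ a Mercer kernel on $X$ with RKHS ${\cal H}_k$ (norm $\|\cdot\|_k$), $k_{\bm x}=k(\cdot,{\bm x})$, ${\bm f}({\bm x})=\langle{\bm f},k_{\bm x}\rangle$; $c:Z\times\mathbb{R}\to[0,\infty)$ a loss with $c_2',c_2''$ its first and second derivatives in the second argument. $L_p({\bm z}_1,{\bm z}_2):=\max\{1,\|{\bm z}_1\|,\|{\bm z}_2\|\}^{p-1}$. ${\cal M}_Z^q:=\{Q\in\mathscr{P}(Z):\int_Z\|{\bm z}\|^qQ(d{\bm z})<\infty\}$. $T_{\bm x}$ is a bounded linear operator on ${\cal H}_k$; $D_{\bm f}$ is the Gâteaux derivative of the ${\cal H}_k$-valued map ${\bm f}\mapsto\mathbb{E}_Q[c_2'({\bm z},{\bm f}({\bm x}))k_{\bm x}]$, a bounded linear operator on ${\cal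 H}_k$. *)

theory Defs
  imports "HOL-Probability.Probability"
begin

definition mercer_kernel :: "'x::topological_space set \<Rightarrow> ('x \<Rightarrow> 'x \<Rightarrow> real) \<Rightarrow> bool" where
  "mercer_kernel X k \<longleftrightarrow> continuous_on (X \<times> X) (\<lambda>p. k (fst p) (snd p))
     \<and> (\<forall>x\<in>X. \<forall>y\<in>X. k x y = k y x)
     \<and> (\<forall>xs a. set xs \<subseteq> X \<longrightarrow> length a = length xs \<longrightarrow>
          (\<Sum>i<length xs. \<Sum>j<length xs. a!i * a!j * k (xs!i) (xs!j)) \<ge> 0)"

definition Lp :: "real \<Rightarrow> 'z::real_normed_vector \<Rightarrow> 'z \<Rightarrow> real" where
  "Lp p z1 z2 = (max 1 (max (norm z1) (norm z2))) powr (p - 1)"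

definition prob_on :: "'z::topological_space set \<Rightarrow> 'z measure \<Rightarrow> bool" where
  "prob_on Z Q \<longleftrightarrow> prob_space Q \<and> space Q = Z \<and> sets Q = sets (restrict_space borel Z)"

definition moment_class :: "'z::real_normed_vector set \<Rightarrow> real \<Rightarrow> 'z measure set" where
  "moment_class Z q = {Q. prob_on Z Q \<and> (\<integral>\<^sup>+ z. ennreal (norm z powr q) \<partial>Q) < \<infinity>}"

definition Tx :: "('x \<Rightarrow> 'h::real_inner) \<Rightarrow> 'x \<Rightarrow> 'h \<Rightarrow> 'h" where
  "Tx kx x h = inner (kx x) h *\<^sub>R kx x"

definition Ptilde :: "('x::topological_space \<times> real) set \<Rightarrow> ('x \<times> real \<Rightarrow> real \<Rightarrow> real) \<Rightarrow> ('x \<times> real \<Rightarrow> real \<Rightarrow> real)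
     \<Rightarrow> ('x \<Rightarrow> 'h::real_inner) \<Rightarrow> 'h \<Rightarrow> 'h \<Rightarrow> ('x \<times> real) measure set" where
  "Ptilde Z c' c'' kx f h = {Q. prob_on Z Q
     \<and> (\<integral>\<^sup>+ z. ennreal (\<bar>c' z (inner f (kx (fst z)))\<bar> * norm (kx (fst z))) \<partial>Q) < \<infinity>
     \<and> (\<integral>\<^sup>+ z. ennreal (\<bar>c'' z (inner f (kx (fst z)))\<bar> * norm (Tx kx (fst z) h)) \<partial>Q) < \<infinity>}"

end

theory Submission
  imports Defs
begin
lemma deriv_bound:
  assumes d: "(g has_real_derivative d) (at w)" and L: "\<And>u v. \<bar>g u - g v\<bar> \<le> L * \<bar>u - v\<bar>"
  shows "\<bar>d\<bar> \<le> L"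
proof -
  have lim: "((\<lambda>h. \<bar>(g (w + h) - g w) / h\<bar>) \<longlongrightarrow> \<bar>d\<bar>) (at 0)"
    using d unfolding DERIV_def by (intro tendsto_rabs)
  have ev: "eventually (\<lambda>h. \<bar>(g (w + h) - g w) / h\<bar> \<le> L) (at (0::real))"
  proof (rule eventually_at_filter[THEN iffD2], rule always_eventually, intro allI impI)
    fix h :: real assume "h \<noteq> 0"
    have "\<bar>g (w + h) - g w\<bar> \<le> L * \<bar>h\<bar>" using L[of "w+h" w] by simp
    then show "\<bar>(g (w + h) - g w) / h\<bar> \<le> L" using \<open>h \<noteq> 0\<close>
      by (simp add: abs_divide divide_le_eq)
  qed
  show ?thesis by (rule tendsto_upperbound[OF lim ev]) simp
qed

lemma pow_le:
  fixes n r q :: real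
  assumes "0 \<le> n" "0 \<le> r" "r \<le> q"
  shows "(max 1 n) powr r \<le> 1 + n powr q"
proof (cases "n \<le> 1")
  case True then show ?thesis by simp
next
  case False
  then have "n powr r \<le> n powr q" using assms by (intro powr_mono) auto
  moreover have "max 1 n = n" using False by simp
  ultimately show ?thesis by simp
qed

lemma vec_deriv_quot:
  fixes F :: "real \<Rightarrow> 'a::real_normed_vector"
  assumes "((\<lambda>t. (F t - F 0) /\<^sub>R t) \<longlongrightarrow> D) (at 0)"
  shows "(F has_vector_derivative D) (at 0)"
  unfolding has_vector_derivative_def has_derivative_iff_norm
proof (intro conjI)
  show "bounded_linear (\<lambda>x. x *\<^sub>R D)" by (rule bounded_linear_scaleR_left)
  have "((\<lambda>t. norm ((F t - F 0) /\<^sub>R t - D)) \<longlongrightarrow> 0) (at 0)"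
    using assms tendsto_norm_zero LIM_zero by blast
  then show "((\<lambda>y. norm (F y - F 0 - (y - 0) *\<^sub>R D) / norm (y - 0)) \<longlongrightarrow> 0) (at 0)"
  proof (rule Lim_transform_eventually)
    show "\<forall>\<^sub>F t in at 0. norm ((F t - F 0) /\<^sub>R t - D) = norm (F t - F 0 - (t - 0) *\<^sub>R D) / norm (t - 0)"
    proof (rule eventually_at_filter[THEN iffD2], rule always_eventually, intro allI impI)
      fix t :: real assume t: "t \<noteq> 0"
      have "F t - F 0 - t *\<^sub>R D = t *\<^sub>R ((F t - F 0) /\<^sub>R t - D)"
        using t by (simp add: algebra_simps)
      then show "norm ((F t - F 0) /\<^sub>R t - D) = norm (F t - F 0 - (t - 0) *\<^sub>R D) / norm (t - 0)"
        using t by simp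
    qed
  qed
qed

lemma int_bound:
  fixes g :: "_ \<Rightarrow> 'b::{banach,second_countable_topology}"
  assumes "integrable M W" "g \<in> borel_measurable M" "\<And>z. z \<in> space M \<Longrightarrow> norm (g z) \<le> K * W z"
  shows "integrable M g"
proof (rule Bochner_Integration.integrable_bound[where f="\<lambda>z. K * W z"])
  show "integrable M (\<lambda>z. K * W z)" using assms(1) by simp
  show "AE x in M. norm (g x) \<le> norm (K * W x)"
    using assms(3) by (intro AE_I2) (smt (verit) real_norm_def)
qed fact

lemma meas_cont:
  fixes f :: "'a::topological_space \<Rightarrow> 'b::topological_space"
  assumes "continuous_on Z f" "sets Q = sets (restrict_space borel Z)"
  shows "f \<in> borel_measurable Q"
  using borel_measurable_continuous_on_restrict[OF assms(1)] measurable_cong_sets[OF assms(2) refl, of borel]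
  by blast

theorem proposition3:
  fixes X :: "(real^'n) set" and Y :: "real set"
    and kx :: "real^'n \<Rightarrow> 'h::{real_inner, banach, second_countable_topology}"
    and c c' c'' :: "(real^'n) \<times> real \<Rightarrow> real \<Rightarrow> real"
    and f :: 'h
    and p0 p1 p2 C0 C1 C2 C3 :: real
  assumes mercer: "mercer_kernel X (\<lambda>x y. inner (kx x) (kx y))"
    and rkhs: "closure (span (kx ` X)) = UNIV"
    and c_nonneg: "\<And>z w. z \<in> X \<times> Y \<Longrightarrow> c z w \<ge> 0"
    and C2': "p0 > 1" "C0 > 0"
      "\<And>z w. z \<in> X \<times> Y \<Longrightarrow> w \<in> Y \<Longrightarrow>
         \<bar>c z w\<bar> \<le> C0 * (norm z powr (p0 - 1) + \<bar>w\<bar> powr (p0 - 1) + 1)"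
    and C4'_diff: "\<And>z w. z \<in> X \<times> Y \<Longrightarrow> (c z has_real_derivative c' z w) (at w)"
    and C4': "C1 > 0" "p1 \<ge> 1"
      "\<And>z1 z2 w1 w2. z1 \<in> X \<times> Y \<Longrightarrow> z2 \<in> X \<times> Y \<Longrightarrow>
         \<bar>c' z1 w1 - c' z2 w2\<bar> \<le> C1 * Lp p1 z1 z2 * (norm (z1 - z2) + \<bar>w1 - w2\<bar>)"
    and C5_diff: "\<And>z w. z \<in> X \<times> Y \<Longrightarrow> (c' z has_real_derivative c'' z w) (at w)"
    and C5: "C2 > 0" "p2 \<ge> 1"
      "\<And>z1 z2 w1 w2. z1 \<in> X \<times> Y \<Longrightarrow> z2 \<in> X \<times> Y \<Longrightarrow> w1 \<in> Y \<Longrightarrow> w2 \<in> Y \<Longrightarrow>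
         \<bar>c'' z1 w1 - c'' z2 w2\<bar> \<le> C2 * Lp p2 z1 z2 * (norm (z1 - z2) + \<bar>w1 - w2\<bar>)"
    and K1': "C3 > 0"
      "\<And>x1 x2. x1 \<in> X \<Longrightarrow> x2 \<in> X \<Longrightarrow> norm (kx x1 - kx x2) \<le> C3 * norm (x1 - x2)"
  shows "(\<forall>h. moment_class (X \<times> Y) (max (p1 + 1) (p2 + 2)) \<subseteq> Ptilde (X \<times> Y) c' c'' kx f h)
    \<and> (\<forall>Q \<in> moment_class (X \<times> Y) (max (p1 + 1) (p2 + 2)).
         bounded_linear (\<lambda>h. \<integral>z. c'' z (inner f (kx (fst z))) *\<^sub>R Tx kx (fst z) h \<partial>Q)
       \<and> (\<forall>h. ((\<lambda>t::real. \<integral>z. c' z (inner (f + t *\<^sub>R h) (kx (fst z))) *\<^sub>R kx (fst z) \<partial>Q)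
              has_vector_derivative (\<integral>z. c'' z (inner f (kx (fst z))) *\<^sub>R Tx kx (fst z) h \<partial>Q)) (at 0)))"
proof -
  define Z where "Z = X \<times> Y"
  define q where "q = max (p1 + 1) (p2 + 2)"
  define m where "m = (\<lambda>z::(real^'n) \<times> real. max 1 (norm z))"
  have C4Z: "\<bar>c' z1 w1 - c' z2 w2\<bar> \<le> C1 * Lp p1 z1 z2 * (norm (z1 - z2) + \<bar>w1 - w2\<bar>)"
    if "z1 \<in> Z" "z2 \<in> Z" for z1 z2 w1 w2 using C4'(3) that by (simp add: Z_def)
  have C5Z: "(c' z has_real_derivative c'' z w) (at w)" if "z \<in> Z" for z w
    using C5_diff that by (simp add: Z_def)
  have m1: "1 \<le> m z" for z by (simp add: m_def)
  have mn: "norm z \<le> m z" for z by (simp add: m_def)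
  have mpos: "0 < m z" for z using m1[of z] by linarith
  have q1: "p1 + 1 \<le> q" by (simp add: q_def)
  have kcont: "continuous_on X kx"
  proof (rule lipschitz_on_continuous_on)
    show "C3-lipschitz_on X kx" using K1' by (auto simp: lipschitz_on_def dist_norm)
  qed
  have kzcont: "continuous_on Z (\<lambda>z. kx (fst z))"
    by (rule continuous_on_compose2[OF kcont continuous_on_fst]) (auto simp: Z_def)
  have c'cont: "continuous_on Z (\<lambda>z. c' z (g z))" if g: "continuous_on Z g" for g
    unfolding continuous_on_def
  proof
    fix z0 assume z0: "z0 \<in> Z"
    have gt: "(g \<longlongrightarrow> g z0) (at z0 within Z)" using g z0 continuous_on_def by blast
    have "((\<lambda>z. C1 * Lp p1 z z0 * (norm (z - z0) + \<bar>g z - g z0\<bar>)) \<longlongrightarrow>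
        C1 * Lp p1 z0 z0 * (norm (z0 - z0) + \<bar>g z0 - g z0\<bar>)) (at z0 within Z)"
      unfolding Lp_def by (intro tendsto_intros gt) auto
    then have lim0: "((\<lambda>z. C1 * Lp p1 z z0 * (norm (z - z0) + \<bar>g z - g z0\<bar>)) \<longlongrightarrow> 0) (at z0 within Z)"
      by simp
    have "((\<lambda>z. c' z (g z) - c' z0 (g z0)) \<longlongrightarrow> 0) (at z0 within Z)"
    proof (rule Lim_null_comparison[OF _ lim0])
      show "\<forall>\<^sub>F z in at z0 within Z. norm (c' z (g z) - c' z0 (g z0)) \<le> C1 * Lp p1 z z0 * (norm (z - z0) + \<bar>g z - g z0\<bar>)"
        unfolding eventually_at_filter
        by (rule always_eventually) (use C4'(3) z0 in \<open>auto simp: Z_def\<close>)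
    qed
    then show "((\<lambda>z. c' z (g z)) \<longlongrightarrow> c' z0 (g z0)) (at z0 within Z)"
      by (simp add: LIM_zero_iff)
  qed
  have main: "(\<forall>h. Q \<in> Ptilde Z c' c'' kx f h)
    \<and> bounded_linear (\<lambda>h. \<integral>z. c'' z (inner f (kx (fst z))) *\<^sub>R Tx kx (fst z) h \<partial>Q)
       \<and> (\<forall>h. ((\<lambda>t::real. \<integral>z. c' z (inner (f + t *\<^sub>R h) (kx (fst z))) *\<^sub>R kx (fst z) \<partial>Q)
              has_vector_derivative (\<integral>z. c'' z (inner f (kx (fst z))) *\<^sub>R Tx kx (fst z) h \<partial>Q)) (at 0))"
    if Q: "Q \<in> moment_class Z q" for Q
  proof -
    have probQ: "prob_space Q" and spQ: "space Q = Z" and setsQ: "sets Q = sets (restrict_space borel Z)"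
      and mom: "(\<integral>\<^sup>+ z. ennreal (norm z powr q) \<partial>Q) < \<infinity>"
      using Q by (auto simp: moment_class_def prob_on_def)
    interpret prob_space Q by (rule probQ)
    have pon: "prob_on Z Q" using Q by (simp add: moment_class_def)
    have meas: "g \<in> borel_measurable Q" if "continuous_on Z g" for g :: "_ \<Rightarrow> real"
      by (rule meas_cont[OF that setsQ])
    have measH: "g \<in> borel_measurable Q" if "continuous_on Z g" for g :: "_ \<Rightarrow> 'h"
      by (rule meas_cont[OF that setsQ])
    have kmeas: "(\<lambda>z. kx (fst z)) \<in> borel_measurable Q" by (rule measH[OF kzcont])
    obtain z0 where z0: "z0 \<in> Z" using not_empty spQ by auto
    define x0 where "x0 = fst z0"
    have x0: "x0 \<in> X" using z0 by (auto simp: Z_def x0_def)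
    define W where "W = (\<lambda>z::(real^'n) \<times> real. 1 + norm z powr q)"
    have Wint: "integrable Q W"
    proof -
      have nm: "(\<lambda>z::(real^'n) \<times> real. norm z) \<in> borel_measurable Q"
        by (rule meas) (intro continuous_intros)
      have "integrable Q (\<lambda>z. norm z powr q)"
      proof (rule integrableI_bounded)
        show "(\<lambda>z. norm z powr q) \<in> borel_measurable Q"
          by (intro powr_real_measurable nm borel_measurable_const)
        show "(\<integral>\<^sup>+ z. ennreal (norm (norm z powr q)) \<partial>Q) < \<infinity>" using mom by simp
      qed
      then show ?thesis unfolding W_def by (intro Bochner_Integration.integrable_add integrable_const)
    qed
    have mW: "m z powr (p1 + 1) \<le> W z" for z
      unfolding W_def m_def by (rule pow_le) (use q1 C4'(2) in auto)
    define A1 where "A1 = norm (kx x0) + C3 * norm x0 + C3"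
    have A1: "0 \<le> A1" using K1'(1) by (simp add: A1_def)
    have kb: "norm (kx (fst z)) \<le> A1 * m z" if z: "z \<in> Z" for z
    proof -
      have xX: "fst z \<in> X" using z by (auto simp: Z_def)
      have "norm (kx (fst z)) \<le> norm (kx x0) + norm (kx (fst z) - kx x0)" by (rule norm_triangle_sub)
      also have "\<dots> \<le> norm (kx x0) + C3 * norm (fst z - x0)" using K1'(2)[OF xX x0] by simp
      also have "\<dots> \<le> norm (kx x0) + C3 * (norm (fst z) + norm x0)"
        using K1'(1) norm_triangle_ineq4[of "fst z" x0] by (simp add: mult_left_mono)
      also have "\<dots> \<le> norm (kx x0) * m z + C3 * (m z + norm x0 * m z)"
      proof -
        have "norm (fst z) \<le> m z" using norm_fst_le[of "fst z" "snd z"] mn[of z] by simp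
        moreover have "norm (kx x0) \<le> norm (kx x0) * m z" "norm x0 \<le> norm x0 * m z"
          using m1[of z] by (simp_all add: mult_le_cancel_left1)
        ultimately show ?thesis using K1'(1) by (smt (verit, best) mult_left_mono)
      qed
      also have "\<dots> = A1 * m z" by (simp add: A1_def algebra_simps)
      finally show ?thesis .
    qed
    have ib: "\<bar>inner g (kx (fst z))\<bar> \<le> norm g * A1 * m z" if "z \<in> Z" for g z
    proof -
      have "\<bar>inner g (kx (fst z))\<bar> \<le> norm g * norm (kx (fst z))" by (rule Cauchy_Schwarz_ineq2)
      also have "\<dots> \<le> norm g * (A1 * m z)" by (rule mult_left_mono[OF kb[OF that]]) simp
      finally show ?thesis by simp
    qed
    define A2 where "A2 = (\<lambda>B. \<bar>c' z0 0\<bar> + C1 * m z0 powr (p1 - 1) * (1 + norm z0 + B))"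
    have A2: "0 \<le> A2 B" if "0 \<le> B" for B
      using that C4'(1) by (simp add: A2_def)
    have c'b: "\<bar>c' z w\<bar> \<le> A2 B * m z powr p1" if z: "z \<in> Z" and w: "\<bar>w\<bar> \<le> B * m z" and B: "0 \<le> B" for z w B
    proof -
      have h1: "\<bar>c' z w - c' z0 0\<bar> \<le> C1 * Lp p1 z z0 * (norm (z - z0) + \<bar>w\<bar>)"
        using C4Z[OF z z0, of w 0] by simp
      have h2: "Lp p1 z z0 \<le> m z0 powr (p1 - 1) * m z powr (p1 - 1)"
      proof -
        have "max 1 (max (norm z) (norm z0)) \<le> m z * m z0"
          using m1[of z] m1[of z0] mn[of z] mn[of z0]
          by (smt (verit, best) mult_le_cancel_left1 mult_le_cancel_right1)
        then have "max 1 (max (norm z) (norm z0)) powr (p1 - 1) \<le> (m z * m z0) powr (p1 - 1)"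
          using C4'(2) by (intro powr_mono2) auto
        also have "\<dots> = m z0 powr (p1 - 1) * m z powr (p1 - 1)"
          using mpos[of z] mpos[of z0] by (simp add: powr_mult)
        finally show ?thesis by (simp add: Lp_def)
      qed
      have h3: "norm (z - z0) + \<bar>w\<bar> \<le> (1 + norm z0 + B) * m z"
      proof -
        have "norm (z - z0) \<le> norm z + norm z0" by (rule norm_triangle_ineq4)
        moreover have "norm z0 \<le> norm z0 * m z" using m1[of z] by (simp add: mult_le_cancel_left1)
        ultimately show ?thesis using mn[of z] w by (simp add: algebra_simps)
      qed
      have h4: "m z powr (p1 - 1) * m z = m z powr p1"
        using mpos[of z] powr_add[of "m z" "p1 - 1" 1] by simp
      have h5: "1 \<le> m z powr p1" using m1[of z] C4'(2) by (intro ge_one_powr_ge_zero) auto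
      have Lp0: "0 \<le> Lp p1 z z0" by (simp add: Lp_def)
      have "C1 * Lp p1 z z0 * (norm (z - z0) + \<bar>w\<bar>) \<le> C1 * (m z0 powr (p1 - 1) * m z powr (p1 - 1)) * ((1 + norm z0 + B) * m z)"
        using C4'(1) h2 h3 Lp0 by (intro mult_mono) auto
      also have "\<dots> = C1 * m z0 powr (p1 - 1) * (1 + norm z0 + B) * (m z powr (p1 - 1) * m z)"
        by (simp add: algebra_simps)
      also have "\<dots> = C1 * m z0 powr (p1 - 1) * (1 + norm z0 + B) * m z powr p1" by (simp add: h4)
      finally have h6: "C1 * Lp p1 z z0 * (norm (z - z0) + \<bar>w\<bar>) \<le> C1 * m z0 powr (p1 - 1) * (1 + norm z0 + B) * m z powr p1" .
      have h7: "\<bar>c' z0 0\<bar> \<le> \<bar>c' z0 0\<bar> * m z powr p1" using h5 by (simp add: mult_le_cancel_left1)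
      have "\<bar>c' z w\<bar> \<le> \<bar>c' z0 0\<bar> + C1 * Lp p1 z z0 * (norm (z - z0) + \<bar>w\<bar>)" using h1 by linarith
      also have "\<dots> \<le> A2 B * m z powr p1" using h6 h7 by (simp add: A2_def algebra_simps)
      finally show ?thesis .
    qed
    have c''b: "\<bar>c'' z w\<bar> \<le> C1 * m z powr (p1 - 1)" if z: "z \<in> Z" for z w
    proof -
      have Lpz: "Lp p1 z z = m z powr (p1 - 1)" by (simp add: Lp_def m_def)
      show ?thesis
      proof (rule deriv_bound[OF C5Z[OF z]])
        show "\<bar>c' z u - c' z v\<bar> \<le> C1 * m z powr (p1 - 1) * \<bar>u - v\<bar>" for u v
          using C4Z[OF z z, of u v] Lpz by simp
      qed
    qed
    have c'meas: "(\<lambda>z. c' z (g z)) \<in> borel_measurable Q" if "continuous_on Z g" for g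
      by (rule meas[OF c'cont[OF that]])
    have c''meas: "(\<lambda>z. c'' z (g z)) \<in> borel_measurable Q" if g: "continuous_on Z g" for g
    proof (rule borel_measurable_LIMSEQ_metric)
      define T where "T = (\<lambda>i::nat. inverse (real (Suc i)))"
      show "(\<lambda>z. (c' z (g z + T i) - c' z (g z)) / T i) \<in> borel_measurable Q" for i
        by (intro borel_measurable_divide borel_measurable_diff borel_measurable_const c'meas g continuous_intros)
      show "(\<lambda>i. (c' z (g z + T i) - c' z (g z)) / T i) \<longlonglongrightarrow> c'' z (g z)" if "z \<in> space Q" for z
      proof -
        have "((\<lambda>h. (c' z (g z + h) - c' z (g z)) / h) \<longlongrightarrow> c'' z (g z)) (at 0)"
          using C5Z[of z "g z"] that spQ by (simp add: DERIV_def)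
        moreover have "\<forall>i. T i \<in> UNIV - {0}" by (simp add: T_def)
        moreover have "T \<longlonglongrightarrow> 0" unfolding T_def by (rule LIMSEQ_inverse_real_of_nat)
        ultimately show ?thesis unfolding tendsto_at_iff_sequentially comp_def by blast
      qed
    qed
    have mp1: "m z powr p1 * m z = m z powr (p1 + 1)" for z
      using mpos[of z] powr_add[of "m z" p1 1] by simp
    have mp2: "m z powr (p1 - 1) * (m z * m z) = m z powr (p1 + 1)" for z
      using mpos[of z] powr_add[of "m z" "p1 - 1" 2] by (simp add: power2_eq_square add.commute)
    have bnd1: "\<bar>a\<bar> * norm v \<le> (P * A1) * W z"
      if "\<bar>a\<bar> \<le> P * m z powr p1" "norm v \<le> A1 * m z" "0 \<le> P" for a v P z
    proof -
      have "\<bar>a\<bar> * norm v \<le> (P * m z powr p1) * (A1 * m z)"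
        using that A1 by (intro mult_mono) auto
      also have "\<dots> = (P * A1) * (m z powr p1 * m z)" by (simp add: algebra_simps)
      also have "\<dots> \<le> (P * A1) * W z" using mW[of z] mp1[of z] that(3) A1 by (intro mult_left_mono) auto
      finally show ?thesis .
    qed
    have bnd2: "\<bar>a\<bar> * (\<bar>b\<bar> * norm v) \<le> (C1 * P * A1 * A1) * W z"
      if "\<bar>a\<bar> \<le> C1 * m z powr (p1 - 1)" "\<bar>b\<bar> \<le> P * A1 * m z" "norm v \<le> A1 * m z" "0 \<le> P" for a b v P z
    proof -
      have "\<bar>b\<bar> * norm v \<le> (P * A1 * m z) * (A1 * m z)"
        using that A1 by (intro mult_mono) auto
      then have "\<bar>a\<bar> * (\<bar>b\<bar> * norm v) \<le> (C1 * m z powr (p1 - 1)) * ((P * A1 * m z) * (A1 * m z))"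
        using that A1 by (intro mult_mono) auto
      also have "\<dots> = (C1 * P * A1 * A1) * (m z powr (p1 - 1) * (m z * m z))" by (simp add: algebra_simps)
      also have "\<dots> \<le> (C1 * P * A1 * A1) * W z" using mW[of z] mp2[of z] that(4) A1 C4'(1)
        by (intro mult_left_mono) auto
      finally show ?thesis .
    qed
    have acont: "continuous_on Z (\<lambda>z. inner g (kx (fst z)))" for g
      by (intro continuous_intros kzcont)
    have knmeas: "(\<lambda>z. norm (kx (fst z))) \<in> borel_measurable Q"
      by (rule meas) (intro continuous_intros kzcont)
    have Tcont: "continuous_on Z (\<lambda>z. Tx kx (fst z) h)" for h
      unfolding Tx_def by (intro continuous_intros kzcont)
    have Tnmeas: "(\<lambda>z. norm (Tx kx (fst z) h)) \<in> borel_measurable Q" for h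
      by (rule meas) (intro continuous_intros Tcont)
    have Tmeas: "(\<lambda>z. Tx kx (fst z) h) \<in> borel_measurable Q" for h
      by (rule measH) (intro continuous_intros Tcont)
    have part1: "Q \<in> Ptilde Z c' c'' kx f h" for h
    proof -
      have i1: "integrable Q (\<lambda>z. \<bar>c' z (inner f (kx (fst z)))\<bar> * norm (kx (fst z)))"
      proof (rule int_bound[OF Wint])
        show "(\<lambda>z. \<bar>c' z (inner f (kx (fst z)))\<bar> * norm (kx (fst z))) \<in> borel_measurable Q"
          by (intro borel_measurable_times borel_measurable_abs knmeas c'meas acont)
        show "norm (\<bar>c' z (inner f (kx (fst z)))\<bar> * norm (kx (fst z))) \<le> (A2 (norm f * A1) * A1) * W z"
          if "z \<in> space Q" for z
        proof -
          have z: "z \<in> Z" using that spQ by simp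
          have "\<bar>c' z (inner f (kx (fst z)))\<bar> \<le> A2 (norm f * A1) * m z powr p1"
            by (rule c'b[OF z]) (use ib[OF z, of f] A1 in auto)
          then show ?thesis using bnd1[OF _ kb[OF z]] A2[of "norm f * A1"] A1 by simp
        qed
      qed
      have i2: "integrable Q (\<lambda>z. \<bar>c'' z (inner f (kx (fst z)))\<bar> * norm (Tx kx (fst z) h))"
      proof (rule int_bound[OF Wint])
        show "(\<lambda>z. \<bar>c'' z (inner f (kx (fst z)))\<bar> * norm (Tx kx (fst z) h)) \<in> borel_measurable Q"
          by (intro borel_measurable_times borel_measurable_abs Tnmeas c''meas acont)
        show "norm (\<bar>c'' z (inner f (kx (fst z)))\<bar> * norm (Tx kx (fst z) h)) \<le> (C1 * norm h * A1 * A1) * W z"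
          if "z \<in> space Q" for z
        proof -
          have z: "z \<in> Z" using that spQ by simp
          have "\<bar>inner (kx (fst z)) h\<bar> \<le> norm h * A1 * m z" using ib[OF z, of h] by (simp add: inner_commute)
          from bnd2[OF c''b[OF z] this kb[OF z]] show ?thesis by (simp add: Tx_def)
        qed
      qed
      show ?thesis unfolding Ptilde_def using pon i1 i2
        by (auto simp: integrable_iff_bounded abs_mult)
    qed
    define G where "G = (\<lambda>h z. c'' z (inner f (kx (fst z))) *\<^sub>R Tx kx (fst z) h)"
    have Gb: "norm (G h z) \<le> norm h * (C1 * A1 * A1 * W z)" if "z \<in> space Q" for h z
    proof -
      have z: "z \<in> Z" using that spQ by simp
      have "\<bar>inner (kx (fst z)) h\<bar> \<le> norm h * A1 * m z" using ib[OF z, of h] by (simp add: inner_commute)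
      from bnd2[OF c''b[OF z, of "inner f (kx (fst z))"] this kb[OF z]] show ?thesis by (simp add: Tx_def G_def abs_mult mult_ac)
    qed
    have Gmeas: "G h \<in> borel_measurable Q" for h
      unfolding G_def by (intro borel_measurable_scaleR c''meas acont Tmeas)
    have Gint: "integrable Q (G h)" for h
    proof (rule int_bound[OF Wint Gmeas])
      show "norm (G h z) \<le> (norm h * (C1 * A1 * A1)) * W z" if "z \<in> space Q" for z
        using Gb[OF that, of h] by (simp add: mult_ac)
    qed
    have Gadd: "G (x + y) z = G x z + G y z" for x y z
      by (simp add: G_def Tx_def inner_add_right distrib_left scaleR_add_left)
    have Gscale: "G (r *\<^sub>R x) z = r *\<^sub>R G x z" for r x z
      by (simp add: G_def Tx_def)
    have part2: "bounded_linear (\<lambda>h. integral\<^sup>L Q (G h))"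
    proof (rule bounded_linear_intro)
      show "integral\<^sup>L Q (G (x + y)) = integral\<^sup>L Q (G x) + integral\<^sup>L Q (G y)" for x y
        unfolding Gadd by (rule Bochner_Integration.integral_add[OF Gint Gint])
      show "integral\<^sup>L Q (G (r *\<^sub>R x)) = r *\<^sub>R integral\<^sup>L Q (G x)" for r x
        unfolding Gscale by simp
      show "norm (integral\<^sup>L Q (G x)) \<le> norm x * (C1 * A1 * A1 * integral\<^sup>L Q W)" for x
      proof -
        have "norm (integral\<^sup>L Q (G x)) \<le> integral\<^sup>L Q (\<lambda>z. norm (G x z))"
          by (rule integral_norm_bound)
        also have "\<dots> \<le> integral\<^sup>L Q (\<lambda>z. norm x * (C1 * A1 * A1 * W z))"
          by (rule integral_mono) (use Gint Wint Gb in auto)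
        also have "\<dots> = norm x * (C1 * A1 * A1 * integral\<^sup>L Q W)" by simp
        finally show ?thesis .
      qed
    qed
    have part3: "((\<lambda>t::real. \<integral>z. c' z (inner (f + t *\<^sub>R h) (kx (fst z))) *\<^sub>R kx (fst z) \<partial>Q)
              has_vector_derivative integral\<^sup>L Q (G h)) (at 0)" for h
    proof -
      define a where "a = (\<lambda>z::(real^'n) \<times> real. inner f (kx (fst z)))"
      define b where "b = (\<lambda>z::(real^'n) \<times> real. inner h (kx (fst z)))"
      define F where "F = (\<lambda>t::real. \<integral>z. c' z (inner (f + t *\<^sub>R h) (kx (fst z))) *\<^sub>R kx (fst z) \<partial>Q)"
      have Fe: "F t = (\<integral>z. c' z (a z + t * b z) *\<^sub>R kx (fst z) \<partial>Q)" for t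
        by (simp add: F_def a_def b_def inner_add_left)
      have F0: "F 0 = (\<integral>z. c' z (a z) *\<^sub>R kx (fst z) \<partial>Q)" by (simp add: Fe)
      have abcont: "continuous_on Z (\<lambda>z. a z + t * b z)" for t
        unfolding a_def b_def by (intro continuous_intros kzcont)
      have acont': "continuous_on Z a" unfolding a_def by (rule acont)
      have int_t: "integrable Q (\<lambda>z. c' z (a z + t * b z) *\<^sub>R kx (fst z))" for t
      proof (rule int_bound[OF Wint])
        show "(\<lambda>z. c' z (a z + t * b z) *\<^sub>R kx (fst z)) \<in> borel_measurable Q"
          by (intro borel_measurable_scaleR c'meas abcont kmeas)
        show "norm (c' z (a z + t * b z) *\<^sub>R kx (fst z)) \<le> (A2 ((norm f + \<bar>t\<bar> * norm h) * A1) * A1) * W z"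
          if "z \<in> space Q" for z
        proof -
          have z: "z \<in> Z" using that spQ by simp
          have "\<bar>a z + t * b z\<bar> \<le> \<bar>a z\<bar> + \<bar>t\<bar> * \<bar>b z\<bar>" by (simp add: abs_triangle_ineq[THEN order_trans] abs_mult)
          also have "\<dots> \<le> norm f * A1 * m z + \<bar>t\<bar> * (norm h * A1 * m z)"
            using ib[OF z, of f] ib[OF z, of h] unfolding a_def b_def by (intro add_mono mult_left_mono) auto
          also have "\<dots> = ((norm f + \<bar>t\<bar> * norm h) * A1) * m z" by (simp add: algebra_simps)
          finally have "\<bar>c' z (a z + t * b z)\<bar> \<le> A2 ((norm f + \<bar>t\<bar> * norm h) * A1) * m z powr p1"
            by (rule c'b[OF z]) (use A1 in simp)
          from bnd1[OF this kb[OF z]] show ?thesis using A2[of "(norm f + \<bar>t\<bar> * norm h) * A1"] A1 by simp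
        qed
      qed
      have int_0: "integrable Q (\<lambda>z. c' z (a z) *\<^sub>R kx (fst z))" using int_t[of 0] by simp
      define S where "S = (\<lambda>t z. ((c' z (a z + t * b z) - c' z (a z)) / t) *\<^sub>R kx (fst z))"
      have quot: "(F t - F 0) /\<^sub>R t = integral\<^sup>L Q (S t)" if "t \<noteq> 0" for t
      proof -
        have "F t - F 0 = (\<integral>z. c' z (a z + t * b z) *\<^sub>R kx (fst z) - c' z (a z) *\<^sub>R kx (fst z) \<partial>Q)"
          by (simp add: Fe Bochner_Integration.integral_diff[OF int_t int_0])
        then have "(F t - F 0) /\<^sub>R t = (\<integral>z. inverse t *\<^sub>R (c' z (a z + t * b z) *\<^sub>R kx (fst z) - c' z (a z) *\<^sub>R kx (fst z)) \<partial>Q)"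
          by simp
        also have "\<dots> = integral\<^sup>L Q (S t)"
          by (rule Bochner_Integration.integral_cong) (auto simp: S_def divide_inverse scaleR_diff_left[symmetric] mult.commute)
        finally show ?thesis .
      qed
      have Smeas: "S t \<in> borel_measurable Q" for t
        unfolding S_def by (intro borel_measurable_scaleR borel_measurable_divide borel_measurable_diff
            c'meas abcont acont' kmeas borel_measurable_const)
      have Sb: "norm (S t z) \<le> norm h * (C1 * A1 * A1 * W z)" if "z \<in> space Q" "t \<noteq> 0" for t z
      proof -
        have z: "z \<in> Z" using that spQ by simp
        have Lpz: "Lp p1 z z = m z powr (p1 - 1)" by (simp add: Lp_def m_def)
        have "\<bar>c' z (a z + t * b z) - c' z (a z)\<bar> \<le> C1 * m z powr (p1 - 1) * (\<bar>t\<bar> * \<bar>b z\<bar>)"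
          using C4Z[OF z z, of "a z + t * b z" "a z"] Lpz by (simp add: abs_mult)
        then have q1: "\<bar>(c' z (a z + t * b z) - c' z (a z)) / t\<bar> \<le> C1 * m z powr (p1 - 1) * \<bar>b z\<bar>"
          using that(2) by (simp add: abs_divide divide_le_eq mult_ac)
        have bb: "\<bar>b z\<bar> \<le> norm h * A1 * m z" using ib[OF z, of h] by (simp add: b_def)
        have "\<bar>(c' z (a z + t * b z) - c' z (a z)) / t\<bar> * norm (kx (fst z)) \<le> (C1 * m z powr (p1 - 1) * \<bar>b z\<bar>) * norm (kx (fst z))"
          using q1 by (intro mult_right_mono) auto
        also have "\<dots> = \<bar>C1 * m z powr (p1 - 1)\<bar> * (\<bar>b z\<bar> * norm (kx (fst z)))"
          using C4'(1) by (simp add: abs_mult)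
        also have "\<dots> \<le> (C1 * norm h * A1 * A1) * W z"
          by (rule bnd2[OF _ bb kb[OF z]]) (use C4'(1) in auto)
        finally show ?thesis by (simp add: S_def mult_ac)
      qed
      have Slim: "((\<lambda>t. S t z) \<longlongrightarrow> G h z) (at 0)" if z: "z \<in> Z" for z
      proof -
        have d1: "((\<lambda>t. a z + t * b z) has_real_derivative b z) (at 0)"
          by (auto intro!: derivative_eq_intros)
        have d2: "(c' z has_real_derivative c'' z (a z)) (at (a z + 0 * b z))"
          using C5Z[OF z] by simp
        have "((\<lambda>t. c' z (a z + t * b z)) has_real_derivative c'' z (a z) * b z) (at 0)"
          by (rule DERIV_chain2[OF d2 d1])
        then have "((\<lambda>t. (c' z (a z + t * b z) - c' z (a z)) / t) \<longlongrightarrow> c'' z (a z) * b z) (at 0)"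
          by (simp add: DERIV_def)
        then have "((\<lambda>t. S t z) \<longlongrightarrow> (c'' z (a z) * b z) *\<^sub>R kx (fst z)) (at 0)"
          unfolding S_def by (intro tendsto_scaleR tendsto_const)
        moreover have "(c'' z (a z) * b z) *\<^sub>R kx (fst z) = G h z"
          by (simp add: G_def Tx_def a_def b_def inner_commute)
        ultimately show ?thesis by simp
      qed
      have "((\<lambda>t. (F t - F 0) /\<^sub>R t) \<longlongrightarrow> integral\<^sup>L Q (G h)) (at 0)"
        unfolding tendsto_at_iff_sequentially
      proof (intro allI impI)
        fix T :: "nat \<Rightarrow> real" assume T: "\<forall>i. T i \<in> UNIV - {0}" and T0: "T \<longlonglongrightarrow> 0"
        have "(\<lambda>i. integral\<^sup>L Q (S (T i))) \<longlonglongrightarrow> integral\<^sup>L Q (G h)"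
        proof (rule integral_dominated_convergence[where w="\<lambda>z. norm h * (C1 * A1 * A1 * W z)"])
          show "G h \<in> borel_measurable Q" by (rule Gmeas)
          show "S (T i) \<in> borel_measurable Q" for i by (rule Smeas)
          show "integrable Q (\<lambda>z. norm h * (C1 * A1 * A1 * W z))" using Wint by simp
          show "AE z in Q. (\<lambda>i. S (T i) z) \<longlonglongrightarrow> G h z"
          proof (rule AE_I2)
            fix z assume "z \<in> space Q"
            then have z: "z \<in> Z" using spQ by simp
            show "(\<lambda>i. S (T i) z) \<longlonglongrightarrow> G h z"
              using Slim[OF z] T T0 unfolding tendsto_at_iff_sequentially comp_def by blast
          qed
          show "AE z in Q. norm (S (T i) z) \<le> norm h * (C1 * A1 * A1 * W z)" for i
            using Sb T by (intro AE_I2) auto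
        qed
        moreover have "((\<lambda>t. (F t - F 0) /\<^sub>R t) \<circ> T) = (\<lambda>i. integral\<^sup>L Q (S (T i)))"
          using T quot by (auto simp: fun_eq_iff)
        ultimately show "((\<lambda>t. (F t - F 0) /\<^sub>R t) \<circ> T) \<longlonglongrightarrow> integral\<^sup>L Q (G h)" by simp
      qed
      then have "(F has_vector_derivative integral\<^sup>L Q (G h)) (at 0)" by (rule vec_deriv_quot)
      then show ?thesis by (simp add: F_def)
    qed
    show ?thesis using part1 part2 part3 unfolding G_def by blast
  qed
  show ?thesis using main by (auto simp: Z_def q_def)
qed
end
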